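(* Let $\varrho(N)$ be probability measures on $\hat U(N)$, $N\in\mathbb{N}$, such that $m_{N,PP(0)}[\varrho(N)]$ converges as $N\to\infty$ in probability, in the sense of moments, to a deterministic measure $\mu^{(0)}$ with moments $(\mu^{(0)}_k)_{k\ge0}$. Then for every $q\in[-1,1]$, $m_{N,PP(q)}[\varrho(N)]$ converges in probability, in the sense of moments, to a deterministic probability measure $\mu^{(q)}$ whose moments $(\mu^{(q)}_k)$ satisfy the identity of formal power series \[ \exp\Big(-q\sum_{k\ge0}\mu^{(0)}_kz^{k+1}\Big)=1-q\sum_{k\ge0}\mu^{(q)}_kz^{k+1}. \]
   Context: A signature of length $N$ is a tuple $\lambda=(\lambda_1\ge\dots\ge\lambda_N)\in\mathbb{Z}^N$; $\hat U(N)$ denotes the set of signatures of length $N$. For $q\in[-1,1]$ and $\lambda\in\hat U(N)$ the $q$-deformed Perelomov–Popov measure is \[ m_{N,PP(q)}[\lambda]=\frac1N\sum_{i=1}^N\Big(\prod_{j\ne i}\frac{(\lambda_i-i)-(\lambda_j-j)-q}{(\lambda_i-i)-(\lambda_j-j)}\Big)\delta\Big(\frac{\lambda_i+N-i}{N}\Big), \] and $m_{N,PP(q)}[\varrho(N)]$ denotes the random measure $m_{N,PP(q)}[\lambda]$ with $\lambda$ distributed according to $\varrho(N)$. Random measures $m_N$ converge in probability in the sense of moments to a deterministic measure $\mu$ if for every $k$, $\int t^k m_N(dt)\to\int t^k\mu(dt)$ in probability. *)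

theory Defs
  imports "HOL-Probability.Probability" "HOL-Computational_Algebra.Formal_Power_Series"
begin

text \<open>Signatures of length N, represented as integer lists (0-based indices:
  list position i corresponds to the paper's index i+1).\<close>
definition signatures :: "nat \<Rightarrow> int list set" where
  "signatures N = {l. length l = N \<and> sorted_wrt (\<ge>) l}"

definition pp_weight :: "real \<Rightarrow> nat \<Rightarrow> int list \<Rightarrow> nat \<Rightarrow> real" where
  "pp_weight q N l i =
     (1 / real N) * (\<Prod>j\<in>{0..<N} - {i}.
        (real_of_int ((l!i - int i) - (l!j - int j)) - q) / real_of_int ((l!i - int i) - (l!j - int j)))"

text \<open>Location of the atom with (0-based) index i: (lambda_i + N - i)/N with 1-based i.\<close>
definition pp_atom :: "nat \<Rightarrow> int list \<Rightarrow> nat \<Rightarrow> real" where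
  "pp_atom N l i = (real_of_int (l!i) + real N - real (i + 1)) / real N"

text \<open>k-th moment of the (finite, discrete, possibly signed) measure m_{N,PP(q)}[l],
  i.e. the integral of t^k against sum_i weight_i * delta(atom_i).\<close>
definition pp_moment :: "real \<Rightarrow> nat \<Rightarrow> int list \<Rightarrow> nat \<Rightarrow> real" where
  "pp_moment q N l k = (\<Sum>i<N. pp_weight q N l i * pp_atom N l i ^ k)"

definition pp_moments_converge_in_prob ::
  "real \<Rightarrow> (nat \<Rightarrow> int list pmf) \<Rightarrow> (nat \<Rightarrow> real) \<Rightarrow> bool" where
  "pp_moments_converge_in_prob q \<rho> c \<longleftrightarrow>
     (\<forall>k. \<forall>\<epsilon>>0. (\<lambda>N. measure_pmf.prob (\<rho> N) {l. \<bar>pp_moment q N l k - c k\<bar> > \<epsilon>})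
                    \<longlonglongrightarrow> 0)"

definition moment :: "real measure \<Rightarrow> nat \<Rightarrow> real" where
  "moment \<mu> k = (\<integral>t. t ^ k \<partial>\<mu>)"

end

theory Submission
  imports Defs "HOL-Computational_Algebra.Polynomial_FPS"
begin


definition wt :: "nat \<Rightarrow> (nat \<Rightarrow> real) \<Rightarrow> real \<Rightarrow> nat \<Rightarrow> real" where
 "wt N a e i = (\<Prod>j\<in>{..<N}-{i}. (a i - a j - e) / (a i - a j))"

lemma monic_lin_prod:
  fixes c :: "nat \<Rightarrow> real"
  shows "degree (\<Prod>j<N. [:c j, 1:]) = N \<and> coeff (\<Prod>j<N. [:c j, 1:]) N = 1"
proof -
  have d: "degree (\<Prod>j<N. [:c j, 1:]) = N"
    by (subst degree_prod_eq_sum_degree) auto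
  have "lead_coeff (\<Prod>j<N. [:c j, 1:]) = 1"
    by (simp add: lead_coeff_prod)
  with d show ?thesis by simp
qed

lemma lagrange_t:
  assumes inj: "inj_on a {..<N}" and N: "N \<ge> 1"
  shows "(\<Prod>j<N. [:-(a j + e), 1:]) - (\<Prod>j<N. [:- a j, 1:])
     = (\<Sum>i<N. smult (- e * wt N a e i) (\<Prod>j\<in>{..<N}-{i}. [:- a j, 1:]))"
proof (rule poly_eqI_degree[where A = "a ` {..<N}"])
  have cardA: "card (a ` {..<N}) = N" using inj by (simp add: card_image)
  fix x assume "x \<in> a ` {..<N}"
  then obtain k where k: "k < N" "x = a k" by auto
  have nz: "a k - a j \<noteq> 0" if "j \<in> {..<N}-{k}" for j
    using inj k that by (auto dest: inj_onD)
  have L1: "(\<Prod>j<N. a k - a j) = 0"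
    using k by (intro prod_zero) auto
  have L2: "(\<Prod>j<N. a k - (a j + e)) = (a k - (a k + e)) * (\<Prod>j\<in>{..<N}-{k}. a k - (a j + e))"
    using k by (subst prod.remove[of _ k]) auto
  have R0: "(\<Sum>i<N. (- e * wt N a e i) * (\<Prod>j\<in>{..<N}-{i}. a k - a j))
        = (- e * wt N a e k) * (\<Prod>j\<in>{..<N}-{k}. a k - a j)"
  proof -
    have "(\<Sum>i<N. (- e * wt N a e i) * (\<Prod>j\<in>{..<N}-{i}. a k - a j))
       = (- e * wt N a e k) * (\<Prod>j\<in>{..<N}-{k}. a k - a j)
         + (\<Sum>i\<in>{..<N}-{k}. (- e * wt N a e i) * (\<Prod>j\<in>{..<N}-{i}. a k - a j))"
      using k by (subst sum.remove[of _ k]) auto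
    also have "(\<Sum>i\<in>{..<N}-{k}. (- e * wt N a e i) * (\<Prod>j\<in>{..<N}-{i}. a k - a j)) = 0"
      using k by (intro sum.neutral ballI) (auto intro!: prod_zero)
    finally show ?thesis by simp
  qed
  have W: "wt N a e k * (\<Prod>j\<in>{..<N}-{k}. a k - a j) = (\<Prod>j\<in>{..<N}-{k}. a k - (a j + e))"
    unfolding wt_def prod.distrib[symmetric]
    by (intro prod.cong refl) (use nz in \<open>auto simp: field_simps\<close>)
  show "poly ((\<Prod>j<N. [:-(a j + e), 1:]) - (\<Prod>j<N. [:- a j, 1:])) x
     = poly (\<Sum>i<N. smult (- e * wt N a e i) (\<Prod>j\<in>{..<N}-{i}. [:- a j, 1:])) x"
    using k L1 L2 R0 W by (simp add: poly_prod poly_sum algebra_simps)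
next
  have cardA: "card (a ` {..<N}) = N" using inj by (simp add: card_image)
  note m1 = monic_lin_prod[of "\<lambda>j. -(a j + e)" N] and m2 = monic_lin_prod[of "\<lambda>j. - a j" N]
  define p where "p = (\<Prod>j<N. [:-(a j + e), 1:]) - (\<Prod>j<N. [:- a j, 1:])"
  have dle: "degree p \<le> N" unfolding p_def using m1 m2 by (intro degree_diff_le) auto
  have cN: "coeff p N = 0" unfolding p_def using m1 m2 by simp
  have "degree p < N"
  proof (cases "p = 0")
    case True then show ?thesis using N by simp
  next
    case False
    then have "coeff p (degree p) \<noteq> 0" by simp
    with cN dle show ?thesis by (cases "degree p = N") auto
  qed
  then show "degree ((\<Prod>j<N. [:-(a j + e), 1:]) - (\<Prod>j<N. [:- a j, 1:])) < card (a ` {..<N})"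
    unfolding p_def cardA .
next
  have cardA: "card (a ` {..<N}) = N" using inj by (simp add: card_image)
  have "degree (\<Sum>i<N. smult (- e * wt N a e i) (\<Prod>j\<in>{..<N}-{i}. [:- a j, 1:])) \<le> N - 1"
  proof (intro degree_sum_le)
    fix i assume i: "i \<in> {..<N}"
    have "degree (smult (- e * wt N a e i) (\<Prod>j\<in>{..<N}-{i}. [:- a j, 1:]))
        \<le> degree (\<Prod>j\<in>{..<N}-{i}. [:- a j, 1:])" by (rule degree_smult_le)
    also have "\<dots> \<le> sum (degree \<circ> (\<lambda>j. [:- a j, 1:])) ({..<N}-{i})"
      by (intro degree_prod_sum_le) auto
    also have "\<dots> = N - 1" using i by simp
    finally show "degree (smult (- e * wt N a e i) (\<Prod>j\<in>{..<N}-{i}. [:- a j, 1:])) \<le> N - 1" .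
  qed auto
  then show "degree (\<Sum>i<N. smult (- e * wt N a e i) (\<Prod>j\<in>{..<N}-{i}. [:- a j, 1:])) < card (a ` {..<N})"
    using N cardA by linarith
qed

lemma lagrange_X:
  assumes inj: "inj_on a {..<N}" and N: "N \<ge> 1"
  shows "(\<Prod>j<N. [:1, -(a j + e):]) - (\<Prod>j<N. [:1, - a j:])
     = (\<Sum>i<N. smult (- e * wt N a e i) ([:0,1:] * (\<Prod>j\<in>{..<N}-{i}. [:1, - a j:])))"
proof -
  note T = arg_cong[OF lagrange_t[OF inj N, of e], of poly]
  have "poly ((\<Prod>j<N. [:1, -(a j + e):]) - (\<Prod>j<N. [:1, - a j:])) x
     = poly (\<Sum>i<N. smult (- e * wt N a e i) ([:0,1:] * (\<Prod>j\<in>{..<N}-{i}. [:1, - a j:]))) x" for x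
  proof (cases "x = 0")
    case True then show ?thesis by (simp add: poly_prod poly_sum)
  next
    case False
    have pr: "(\<Prod>j\<in>S. poly [:1, d j:] x) = x ^ card S * (\<Prod>j\<in>S. poly [:d j, 1:] (1/x))" for S d
    proof -
      have "(\<Prod>j\<in>S. poly [:1, d j:] x) = (\<Prod>j\<in>S. x * poly [:d j, 1:] (1/x))"
        using False by (intro prod.cong refl) (simp add: field_simps)
      then show ?thesis by (simp add: prod.distrib)
    qed
    have [simp]: "poly [:0,1:] x = x" by simp
    have xN: "x ^ N = x * x ^ (N - 1)" using N by (cases N) auto
    have "poly ((\<Prod>j<N. [:1, -(a j + e):]) - (\<Prod>j<N. [:1, - a j:])) x
       = x ^ N * poly ((\<Prod>j<N. [:-(a j + e), 1:]) - (\<Prod>j<N. [:- a j, 1:])) (1/x)"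
      by (simp only: poly_diff poly_prod pr right_diff_distrib card_lessThan)
    also have "\<dots> = x ^ N * poly (\<Sum>i<N. smult (- e * wt N a e i) (\<Prod>j\<in>{..<N}-{i}. [:- a j, 1:])) (1/x)"
      by (simp only: T)
    also have "\<dots> = poly (\<Sum>i<N. smult (- e * wt N a e i) ([:0,1:] * (\<Prod>j\<in>{..<N}-{i}. [:1, - a j:]))) x"
      by (simp only: poly_sum poly_smult poly_mult poly_prod pr sum_distrib_left)
         (simp add: card_Diff_singleton xN mult_ac del: poly_pCons)
    finally show ?thesis .
  qed
  then have "poly ((\<Prod>j<N. [:1, -(a j + e):]) - (\<Prod>j<N. [:1, - a j:]))
     = poly (\<Sum>i<N. smult (- e * wt N a e i) ([:0,1:] * (\<Prod>j\<in>{..<N}-{i}. [:1, - a j:])))"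
    by (rule ext)
  then show ?thesis by (rule poly_eq_poly_eq_iff[THEN iffD1])
qed




definition geo :: "real \<Rightarrow> real fps" where "geo c = Abs_fps (\<lambda>k. c ^ k)"
definition lin :: "real \<Rightarrow> real fps" where "lin c = 1 - fps_const c * fps_X"
definition Qf :: "(nat \<Rightarrow> real) \<Rightarrow> nat \<Rightarrow> real fps" where "Qf c N = (\<Prod>j<N. lin (c j))"
definition Lf :: "(nat \<Rightarrow> real) \<Rightarrow> nat \<Rightarrow> real fps" where
  "Lf c N = (\<Sum>j<N. - (fps_const (c j) * geo (c j)))"

lemma geo_lin: "geo c * lin c = 1"
proof -
  have "fps_nth (geo c * lin c) n = fps_nth (1::real fps) n" for n
    unfolding lin_def geo_def
    by (cases n) (simp_all add: right_diff_distrib mult.assoc[symmetric])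
  then show ?thesis by (simp add: fps_eq_iff)
qed

lemma fps_of_poly_lin: "fps_of_poly [:1, - c:] = lin c"
  by (simp add: fps_of_poly_linear' lin_def)

lemma lagrange_fps:
  assumes inj: "inj_on a {..<N}" and N: "N \<ge> 1"
  shows "Qf (\<lambda>j. a j + e) N - Qf a N
     = (\<Sum>i<N. fps_const (- e * wt N a e i) * fps_X * (\<Prod>j\<in>{..<N}-{i}. lin (a j)))"
proof -
  have "fps_of_poly ((\<Prod>j<N. [:1, -(a j + e):]) - (\<Prod>j<N. [:1, - a j:]))
     = fps_of_poly (\<Sum>i<N. smult (- e * wt N a e i) ([:0,1:] * (\<Prod>j\<in>{..<N}-{i}. [:1, - a j:])))"
    by (simp only: lagrange_X[OF inj N])
  then show ?thesis
    by (simp only: fps_of_poly_diff fps_of_poly_prod fps_of_poly_sum fps_of_poly_smult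
       fps_of_poly_mult fps_of_poly_lin fps_of_poly_fps_X Qf_def mult.assoc)
qed

lemma geo_Qf: assumes "i < N" shows "geo (a i) * Qf a N = (\<Prod>j\<in>{..<N}-{i}. lin (a j))"
  unfolding Qf_def using assms
  by (subst prod.remove[of _ i]) (auto simp: mult.assoc[symmetric] geo_lin)

lemma moment_fps: "Abs_fps (\<lambda>k. \<Sum>i<N. v i * a i ^ k) = (\<Sum>i<N. fps_const (v i) * geo (a i))"
  by (simp add: fps_eq_iff geo_def fps_sum_nth)

lemma key_identity:
  assumes inj: "inj_on a {..<N}" and N: "N \<ge> 1" and v: "\<And>i. i < N \<Longrightarrow> q * v i = e * wt N a e i"
  shows "(1 - fps_const q * fps_X * Abs_fps (\<lambda>k. \<Sum>i<N. v i * a i ^ k)) * Qf a N = Qf (\<lambda>j. a j + e) N"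
proof -
  have S: "fps_const q * fps_X * Abs_fps (\<lambda>k. \<Sum>i<N. v i * a i ^ k) * Qf a N
     = (\<Sum>i<N. fps_const (e * wt N a e i) * fps_X * (\<Prod>j\<in>{..<N}-{i}. lin (a j)))"
    unfolding moment_fps sum_distrib_left sum_distrib_right
  proof (intro sum.cong refl)
    fix i assume i: "i \<in> {..<N}"
    have "fps_const q * fps_X * (fps_const (v i) * geo (a i)) * Qf a N
       = fps_const (q * v i) * fps_X * (geo (a i) * Qf a N)" by (simp add: mult_ac)
    also have "\<dots> = fps_const (e * wt N a e i) * fps_X * (\<Prod>j\<in>{..<N}-{i}. lin (a j))"
      using i v geo_Qf[of i N a] by simp
    finally show "fps_const q * fps_X * (fps_const (v i) * geo (a i)) * Qf a N
       = fps_const (e * wt N a e i) * fps_X * (\<Prod>j\<in>{..<N}-{i}. lin (a j))" .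
  qed
  have M: "(\<Sum>i<N. fps_const (- e * wt N a e i) * fps_X * (\<Prod>j\<in>{..<N}-{i}. lin (a j)))
     = - (\<Sum>i<N. fps_const (e * wt N a e i) * fps_X * (\<Prod>j\<in>{..<N}-{i}. lin (a j)))"
    by (subst sum_negf[symmetric], intro sum.cong refl) (simp flip: fps_const_neg)
  have L: "Qf (\<lambda>j. a j + e) N = Qf a N - (\<Sum>i<N. fps_const (e * wt N a e i) * fps_X * (\<Prod>j\<in>{..<N}-{i}. lin (a j)))"
    using lagrange_fps[OF inj N, of e] unfolding M by (simp add: algebra_simps)
  show ?thesis unfolding left_diff_distrib S L by simp
qed

lemma deriv_lin: "fps_deriv (lin c) = lin c * (- (fps_const c * geo c))"
proof -
  have "lin c * (- (fps_const c * geo c)) = - (fps_const c * (geo c * lin c))"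
    by (simp only: mult_minus_right mult.assoc mult.commute mult.left_commute)
  then show ?thesis by (simp only: geo_lin mult_1_right) (simp add: lin_def)
qed

lemma deriv_Qf: "fps_deriv (Qf c N) = Qf c N * Lf c N"
proof (induction N)
  case 0 then show ?case by (simp add: Qf_def Lf_def)
next
  case (Suc N)
  have "Qf c (Suc N) = Qf c N * lin (c N)" by (simp add: Qf_def)
  moreover have "Lf c (Suc N) = Lf c N + - (fps_const (c N) * geo (c N))" by (simp add: Lf_def)
  ultimately show ?case using Suc deriv_lin[of "c N"]
    by (simp only: fps_deriv_mult) (simp add: algebra_simps)
qed

lemma Qf_nth0: "fps_nth (Qf c N) 0 = 1"
  by (induction N) (simp_all add: Qf_def lin_def)

lemma deriv_H:
  assumes "H * Qf a N = Qf b N"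
  shows "fps_deriv H = H * (Lf b N - Lf a N)"
proof -
  have "fps_deriv (H * Qf a N) = fps_deriv (Qf b N)" using assms by simp
  then have "fps_deriv H * Qf a N + H * (Qf a N * Lf a N) = Qf b N * Lf b N"
    by (simp only: fps_deriv_mult deriv_Qf) (simp add: algebra_simps)
  then have "(fps_deriv H - H * (Lf b N - Lf a N)) * Qf a N = 0"
    using assms by (simp add: algebra_simps)
  moreover have "Qf a N \<noteq> 0" using Qf_nth0[of a N] by auto
  ultimately show ?thesis by simp
qed

lemma Lf_diff_nth: "fps_nth (Lf b N - Lf a N) k = (\<Sum>j<N. a j ^ Suc k - b j ^ Suc k)"
  by (simp add: Lf_def fps_sum_nth geo_def sum_subtractf sum_negf)

lemma rec_from_deriv:
  assumes "fps_deriv H = H * D"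
  shows "real (Suc n) * fps_nth H (Suc n) = (\<Sum>i\<le>n. fps_nth H i * fps_nth D (n - i))"
proof -
  have "fps_nth (fps_deriv H) n = fps_nth (H * D) n" using assms by simp
  then show ?thesis by (simp add: fps_mult_nth atLeast0AtMost)
qed




definition xs :: "int list \<Rightarrow> nat \<Rightarrow> int" where "xs l i = l!i - int i"

lemma sig_strict: assumes "l \<in> signatures N" "i < j" "j < N" shows "xs l j < xs l i"
  using sorted_wrt_nth_less[of "(\<ge>)" l i j] assms by (auto simp: signatures_def xs_def)

lemma sig_neq: assumes "l \<in> signatures N" "i < N" "j < N" "i \<noteq> j" shows "xs l i \<noteq> xs l j"
proof (cases "i < j")
  case True then show ?thesis using sig_strict[OF assms(1) True assms(3)] by simp
next
  case False then have "j < i" using assms(4) by simp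
  then show ?thesis using sig_strict[OF assms(1) _ assms(2)] by force
qed

lemma atom_diff: "N > 0 \<Longrightarrow> pp_atom N l i - pp_atom N l j = real_of_int (xs l i - xs l j) / real N"
  by (simp add: pp_atom_def xs_def diff_divide_distrib[symmetric])

lemma atom_inj: assumes "l \<in> signatures N" shows "inj_on (pp_atom N l) {..<N}"
proof (rule inj_onI)
  fix i j assume ij: "i \<in> {..<N}" "j \<in> {..<N}" "pp_atom N l i = pp_atom N l j"
  then have N: "N > 0" by auto
  have "real_of_int (xs l i - xs l j) / real N = 0" using atom_diff[OF N, of l i j] ij by simp
  then have "xs l i = xs l j" using N by simp
  then show "i = j" using sig_neq[OF assms] ij by auto
qed

lemma weight_wt:
  assumes "l \<in> signatures N" "i < N"
  shows "pp_weight q N l i = (1 / real N) * wt N (pp_atom N l) (q / real N) i"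
proof -
  have N: "N > 0" using assms by simp
  have fr: "(d - q) / d = (d / real N - q / real N) / (d / real N)" if "d \<noteq> 0" for d :: real
    using that N by (simp add: field_simps)
  show ?thesis unfolding pp_weight_def wt_def atLeast0LessThan
  proof (intro arg_cong[where f = "\<lambda>x. (1 / real N) * x"] prod.cong refl)
    fix j assume j: "j \<in> {..<N} - {i}"
    then have d: "real_of_int (l ! i - int i - (l ! j - int j)) \<noteq> 0"
      using sig_neq[OF assms(1) assms(2), of j] by (auto simp: xs_def)
    have "pp_atom N l i - pp_atom N l j = real_of_int (l ! i - int i - (l ! j - int j)) / real N"
      using atom_diff[OF N, of l i j] by (simp add: xs_def)
    then show "(real_of_int (l ! i - int i - (l ! j - int j)) - q) / real_of_int (l ! i - int i - (l ! j - int j))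
       = (pp_atom N l i - pp_atom N l j - q / real N) / (pp_atom N l i - pp_atom N l j)"
      using fr[OF d] by simp
  qed
qed

lemma weight0:
  assumes "l \<in> signatures N" "i < N"
  shows "pp_weight 0 N l i = 1 / real N"
proof -
  have "(\<Prod>j\<in>{..<N} - {i}. (real_of_int ((l!i - int i) - (l!j - int j)) - 0) / real_of_int ((l!i - int i) - (l!j - int j))) = 1"
  proof (rule prod.neutral, rule ballI)
    fix j assume j: "j \<in> {..<N} - {i}"
    then have d: "real_of_int (l ! i - int i - (l ! j - int j)) \<noteq> 0"
      using sig_neq[OF assms(1) assms(2), of j] by (auto simp: xs_def)
    then show "(real_of_int ((l!i - int i) - (l!j - int j)) - 0) / real_of_int ((l!i - int i) - (l!j - int j)) = 1"
      by (subst diff_zero) (rule divide_self[OF d])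
  qed
  then show ?thesis unfolding pp_weight_def atLeast0LessThan by simp
qed

lemma sum_pow_M0:
  assumes "l \<in> signatures N" "N > 0"
  shows "(\<Sum>j<N. pp_atom N l j ^ r) = real N * pp_moment 0 N l r"
  unfolding pp_moment_def using assms
  by (simp add: weight0 sum_distrib_left)

definition Hs :: "real \<Rightarrow> nat \<Rightarrow> int list \<Rightarrow> real fps" where
  "Hs q N l = 1 - fps_const q * fps_X * Abs_fps (pp_moment q N l)"

lemma Hs_deriv:
  assumes "l \<in> signatures N" "N \<ge> 1"
  shows "fps_deriv (Hs q N l) = Hs q N l * (Lf (\<lambda>j. pp_atom N l j + q / real N) N - Lf (pp_atom N l) N)"
proof (rule deriv_H)
  have pm: "pp_moment q N l = (\<lambda>k. \<Sum>i<N. pp_weight q N l i * pp_atom N l i ^ k)"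
    by (simp add: pp_moment_def fun_eq_iff)
  show "Hs q N l * Qf (pp_atom N l) N = Qf (\<lambda>j. pp_atom N l j + q / real N) N"
    unfolding Hs_def pm
    by (rule key_identity[OF atom_inj[OF assms(1)] assms(2)]) (simp add: weight_wt[OF assms(1)])
qed

lemma binom_diff_sum:
  "(\<Sum>j<N. a j ^ Suc k - (a j + e) ^ Suc k)
    = - (\<Sum>r\<le>k. of_nat (Suc k choose r) * e ^ (Suc k - r) * (\<Sum>j<N. (a j :: real) ^ r))"
proof -
  have "a j ^ Suc k - (a j + e) ^ Suc k = - (\<Sum>r\<le>k. of_nat (Suc k choose r) * a j ^ r * e ^ (Suc k - r))" for j
    by (simp only: binomial_ring[of "a j" e "Suc k"] sum.atMost_Suc) simp
  then show ?thesis
    by (simp add: sum_negf sum_distrib_left mult_ac) (rule sum.swap)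
qed

lemma Hs_rec:
  assumes "l \<in> signatures N" "N \<ge> 1"
  shows "real (Suc n) * fps_nth (Hs q N l) (Suc n)
    = (\<Sum>i\<le>n. fps_nth (Hs q N l) i *
         - (\<Sum>r\<le>n - i. of_nat (Suc (n - i) choose r) * (q / real N) ^ (Suc (n - i) - r) * (real N * pp_moment 0 N l r)))"
proof -
  have M: "\<And>r. (\<Sum>j<N. pp_atom N l j ^ r) = real N * pp_moment 0 N l r"
    using sum_pow_M0 assms by simp
  show ?thesis
    using rec_from_deriv[OF Hs_deriv[OF assms, of q], of n]
    by (simp only: Lf_diff_nth binom_diff_sum M)
qed

lemma Hs_nth0: "fps_nth (Hs q N l) 0 = 1" by (simp add: Hs_def)
lemma Hs_nthSuc: "fps_nth (Hs q N l) (Suc n) = - q * pp_moment q N l n" by (simp add: Hs_def mult.assoc)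




definition cip :: "(nat \<Rightarrow> 'a pmf) \<Rightarrow> (nat \<Rightarrow> 'a \<Rightarrow> real) \<Rightarrow> real \<Rightarrow> bool" where
 "cip \<rho> X c \<longleftrightarrow> (\<forall>\<epsilon>>0. (\<lambda>N. measure_pmf.prob (\<rho> N) {l. \<epsilon> < \<bar>X N l - c\<bar>}) \<longlonglongrightarrow> 0)"

lemma cip_pp: "pp_moments_converge_in_prob q \<rho> c \<longleftrightarrow> (\<forall>k. cip \<rho> (\<lambda>N l. pp_moment q N l k) (c k))"
  by (auto simp: pp_moments_converge_in_prob_def cip_def)

lemma prob_tendsto_0_le:
  assumes "\<And>N. P N \<subseteq> A N \<union> B N"
    and "(\<lambda>N. measure_pmf.prob (\<rho> N) (A N)) \<longlonglongrightarrow> 0"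
    and "(\<lambda>N. measure_pmf.prob (\<rho> N) (B N)) \<longlonglongrightarrow> 0"
  shows "(\<lambda>N. measure_pmf.prob (\<rho> N) (P N)) \<longlonglongrightarrow> 0"
proof (rule tendsto_sandwich[where f = "\<lambda>_. 0" and h = "\<lambda>N. measure_pmf.prob (\<rho> N) (A N) + measure_pmf.prob (\<rho> N) (B N)"])
  show "\<forall>\<^sub>F N in sequentially. 0 \<le> measure_pmf.prob (\<rho> N) (P N)" by simp
  have "measure_pmf.prob (\<rho> N) (P N) \<le> measure_pmf.prob (\<rho> N) (A N \<union> B N)" for N
    using assms(1) by (intro measure_pmf.finite_measure_mono) auto
  also have "\<dots> N \<le> measure_pmf.prob (\<rho> N) (A N) + measure_pmf.prob (\<rho> N) (B N)" for N
    by (intro measure_Un_le) auto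
  finally show "\<forall>\<^sub>F N in sequentially. measure_pmf.prob (\<rho> N) (P N) \<le> measure_pmf.prob (\<rho> N) (A N) + measure_pmf.prob (\<rho> N) (B N)"
    by simp
  show "(\<lambda>N. measure_pmf.prob (\<rho> N) (A N) + measure_pmf.prob (\<rho> N) (B N)) \<longlonglongrightarrow> 0"
    using tendsto_add[OF assms(2,3)] by simp
qed simp

lemma cip_cong:
  assumes "cip \<rho> X c" "\<forall>\<^sub>F N in sequentially. \<forall>l\<in>set_pmf (\<rho> N). X N l = Y N l"
  shows "cip \<rho> Y c"
  unfolding cip_def
proof (intro allI impI)
  fix \<epsilon> :: real assume e: "\<epsilon> > 0"
  have "\<forall>\<^sub>F N in sequentially. measure_pmf.prob (\<rho> N) {l. \<epsilon> < \<bar>X N l - c\<bar>} = measure_pmf.prob (\<rho> N) {l. \<epsilon> < \<bar>Y N l - c\<bar>}"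
    using assms(2)
  proof eventually_elim
    case (elim N)
    have "{l. \<epsilon> < \<bar>X N l - c\<bar>} \<inter> set_pmf (\<rho> N) = {l. \<epsilon> < \<bar>Y N l - c\<bar>} \<inter> set_pmf (\<rho> N)"
      using elim by auto
    then show ?case by (metis measure_Int_set_pmf)
  qed
  with assms(1) e show "(\<lambda>N. measure_pmf.prob (\<rho> N) {l. \<epsilon> < \<bar>Y N l - c\<bar>}) \<longlonglongrightarrow> 0"
    unfolding cip_def by (auto dest: tendsto_cong[THEN iffD1, rotated])
qed

lemma cip_det:
  assumes "f \<longlonglongrightarrow> c"
  shows "cip \<rho> (\<lambda>N l. f N) c"
  unfolding cip_def
proof (intro allI impI)
  fix \<epsilon> :: real assume e: "\<epsilon> > 0"
  have "\<forall>\<^sub>F N in sequentially. dist (f N) c < \<epsilon>" using tendstoD[OF assms e] .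
  then have "\<forall>\<^sub>F N in sequentially. measure_pmf.prob (\<rho> N) {l. \<epsilon> < \<bar>f N - c\<bar>} = 0"
    by eventually_elim (simp add: dist_real_def)
  then show "(\<lambda>N. measure_pmf.prob (\<rho> N) {l. \<epsilon> < \<bar>f N - c\<bar>}) \<longlonglongrightarrow> 0"
    by (rule tendsto_eventually)
qed

lemma cip_const: "cip \<rho> (\<lambda>N l. c) c"
  using cip_det[of "\<lambda>_. c" c \<rho>] by simp

lemma cip_add:
  assumes "cip \<rho> X a" "cip \<rho> Y b"
  shows "cip \<rho> (\<lambda>N l. X N l + Y N l) (a + b)"
  unfolding cip_def
proof (intro allI impI)
  fix \<epsilon> :: real assume e: "\<epsilon> > 0"
  show "(\<lambda>N. measure_pmf.prob (\<rho> N) {l. \<epsilon> < \<bar>X N l + Y N l - (a + b)\<bar>}) \<longlonglongrightarrow> 0"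
  proof (rule prob_tendsto_0_le)
    show "{l. \<epsilon> < \<bar>X N l + Y N l - (a + b)\<bar>} \<subseteq> {l. \<epsilon>/2 < \<bar>X N l - a\<bar>} \<union> {l. \<epsilon>/2 < \<bar>Y N l - b\<bar>}" for N
    proof (rule subsetI)
      fix l assume l: "l \<in> {l. \<epsilon> < \<bar>X N l + Y N l - (a + b)\<bar>}"
      have "\<bar>X N l + Y N l - (a + b)\<bar> \<le> \<bar>X N l - a\<bar> + \<bar>Y N l - b\<bar>" by arith
      then show "l \<in> {l. \<epsilon>/2 < \<bar>X N l - a\<bar>} \<union> {l. \<epsilon>/2 < \<bar>Y N l - b\<bar>}" using l by auto
    qed
    show "(\<lambda>N. measure_pmf.prob (\<rho> N) {l. \<epsilon>/2 < \<bar>X N l - a\<bar>}) \<longlonglongrightarrow> 0"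
      using assms(1) unfolding cip_def by (meson e half_gt_zero)
    show "(\<lambda>N. measure_pmf.prob (\<rho> N) {l. \<epsilon>/2 < \<bar>Y N l - b\<bar>}) \<longlonglongrightarrow> 0"
      using assms(2) unfolding cip_def by (meson e half_gt_zero)
  qed
qed

lemma prod_close:
  fixes x y a b \<epsilon> :: real
  assumes e: "\<epsilon> > 0" and x: "\<bar>x - a\<bar> \<le> min 1 (\<epsilon> / (1 + \<bar>a\<bar> + \<bar>b\<bar>))" and y: "\<bar>y - b\<bar> \<le> min 1 (\<epsilon> / (1 + \<bar>a\<bar> + \<bar>b\<bar>))"
  shows "\<bar>x * y - a * b\<bar> \<le> \<epsilon>"
proof -
  define \<delta> where "\<delta> = min 1 (\<epsilon> / (1 + \<bar>a\<bar> + \<bar>b\<bar>))"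
  have d0: "0 \<le> \<delta>" using e by (simp add: \<delta>_def)
  have d1: "\<delta> \<le> 1" by (simp add: \<delta>_def)
  have d2: "\<delta> * (1 + \<bar>a\<bar> + \<bar>b\<bar>) \<le> \<epsilon>"
  proof -
    have "\<delta> \<le> \<epsilon> / (1 + \<bar>a\<bar> + \<bar>b\<bar>)" by (simp add: \<delta>_def)
    then show ?thesis by (simp add: field_simps)
  qed
  have eq: "x * y - a * b = (x - a) * (y - b) + a * (y - b) + b * (x - a)" by (simp add: algebra_simps)
  have "\<bar>(x - a) * (y - b)\<bar> \<le> \<delta> * \<delta>"
    unfolding abs_mult using x y d0 by (intro mult_mono) (auto simp: \<delta>_def)
  also have "\<dots> \<le> \<delta>" using d0 d1 by (metis mult_left_le)
  finally have 1: "\<bar>(x - a) * (y - b)\<bar> \<le> \<delta>" .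
  have 2: "\<bar>a * (y - b)\<bar> \<le> \<bar>a\<bar> * \<delta>" unfolding abs_mult using y by (intro mult_left_mono) (auto simp: \<delta>_def)
  have 3: "\<bar>b * (x - a)\<bar> \<le> \<bar>b\<bar> * \<delta>" unfolding abs_mult using x by (intro mult_left_mono) (auto simp: \<delta>_def)
  have "\<bar>x * y - a * b\<bar> \<le> \<delta> + \<bar>a\<bar> * \<delta> + \<bar>b\<bar> * \<delta>"
    unfolding eq using 1 2 3 by linarith
  also have "\<dots> = \<delta> * (1 + \<bar>a\<bar> + \<bar>b\<bar>)" by (simp add: algebra_simps)
  finally show ?thesis using d2 by linarith
qed

lemma cip_mult:
  assumes "cip \<rho> X a" "cip \<rho> Y b"
  shows "cip \<rho> (\<lambda>N l. X N l * Y N l) (a * b)"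
  unfolding cip_def
proof (intro allI impI)
  fix \<epsilon> :: real assume e: "\<epsilon> > 0"
  define \<delta> where "\<delta> = min 1 (\<epsilon> / (1 + \<bar>a\<bar> + \<bar>b\<bar>))"
  have d: "\<delta> > 0" using e by (simp add: \<delta>_def)
  show "(\<lambda>N. measure_pmf.prob (\<rho> N) {l. \<epsilon> < \<bar>X N l * Y N l - a * b\<bar>}) \<longlonglongrightarrow> 0"
  proof (rule prob_tendsto_0_le)
    show "{l. \<epsilon> < \<bar>X N l * Y N l - a * b\<bar>} \<subseteq> {l. \<delta> < \<bar>X N l - a\<bar>} \<union> {l. \<delta> < \<bar>Y N l - b\<bar>}" for N
    proof (rule subsetI, rule ccontr)
      fix l assume l: "l \<in> {l. \<epsilon> < \<bar>X N l * Y N l - a * b\<bar>}" "l \<notin> {l. \<delta> < \<bar>X N l - a\<bar>} \<union> {l. \<delta> < \<bar>Y N l - b\<bar>}"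
      then have "\<bar>X N l - a\<bar> \<le> \<delta>" "\<bar>Y N l - b\<bar> \<le> \<delta>" by auto
      then have "\<bar>X N l * Y N l - a * b\<bar> \<le> \<epsilon>" using prod_close[OF e] unfolding \<delta>_def by blast
      then show False using l by simp
    qed
  qed (use assms d in \<open>auto simp: cip_def\<close>)
qed

lemma cip_sum:
  assumes "finite S" "\<And>i. i \<in> S \<Longrightarrow> cip \<rho> (X i) (c i)"
  shows "cip \<rho> (\<lambda>N l. \<Sum>i\<in>S. X i N l) (\<Sum>i\<in>S. c i)"
  using assms
proof (induction S rule: finite_induct)
  case empty then show ?case using cip_const[of \<rho> 0] by simp
next
  case (insert x F)
  then show ?case using cip_add[of \<rho> "X x" "c x" "\<lambda>N l. \<Sum>i\<in>F. X i N l" "\<Sum>i\<in>F. c i"] by simp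
qed

lemma cip_unique:
  assumes "cip \<rho> X c" "\<forall>\<^sub>F N in sequentially. \<forall>l\<in>set_pmf (\<rho> N). X N l = d"
  shows "c = d"
proof (rule ccontr)
  assume ne: "c \<noteq> d"
  have "cip \<rho> (\<lambda>N l. d) c" using cip_cong[OF assms] .
  then have "(\<lambda>N. measure_pmf.prob (\<rho> N) {l. \<bar>d - c\<bar> / 2 < \<bar>d - c\<bar>}) \<longlonglongrightarrow> 0"
  proof -
    have "\<bar>d - c\<bar> / 2 > 0" using ne by simp
    then show ?thesis using \<open>cip \<rho> (\<lambda>N l. d) c\<close> unfolding cip_def by blast
  qed
  moreover have "{l. \<bar>d - c\<bar> / 2 < \<bar>d - c\<bar>} = UNIV" using ne by auto
  moreover have h: "\<bar>d - c\<bar> / 2 < \<bar>d - c\<bar>" using ne by simp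
  ultimately have "(\<lambda>N. 1::real) \<longlonglongrightarrow> 0" by (simp only: h if_True mem_Collect_eq) simp
  then show False by (simp add: LIMSEQ_const_iff)
qed




lemma pp_moment0_zero:
  assumes "l \<in> signatures N" "N \<ge> 1"
  shows "pp_moment 0 N l 0 = 1"
  using assms by (simp add: pp_moment_def weight0)

definition coefD :: "real \<Rightarrow> nat \<Rightarrow> nat \<Rightarrow> nat \<Rightarrow> real" where
  "coefD q k N r = - (of_nat (Suc k choose r) * (q / real N) ^ (Suc k - r) * real N)"

lemma coefD_lim:
  assumes "r \<le> k"
  shows "(\<lambda>N. coefD q k N r) \<longlonglongrightarrow> (if r = k then - (real (Suc k) * q) else 0)"
proof -
  have ev: "\<forall>\<^sub>F N in sequentially. coefD q k N r = - (of_nat (Suc k choose r) * q ^ (Suc k - r) * (1 / real N) ^ (k - r))"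
    using eventually_gt_at_top[of 0]
  proof eventually_elim
    case (elim N)
    have "Suc k - r = Suc (k - r)" using assms by simp
    then show ?case using elim unfolding coefD_def
      by (simp add: power_divide field_simps)
  qed
  have lim: "(\<lambda>N. - (of_nat (Suc k choose r) * q ^ (Suc k - r) * (1 / real N) ^ (k - r)))
      \<longlonglongrightarrow> (if r = k then - (real (Suc k) * q) else 0)"
  proof (cases "r = k")
    case True then show ?thesis by simp
  next
    case False
    then have kr: "k - r > 0" using assms by simp
    have i: "(\<lambda>N. 1 / real N) \<longlonglongrightarrow> 0"
      using tendsto_inverse_0_at_top[OF filterlim_real_sequentially] by (simp add: inverse_eq_divide)
    have "(\<lambda>N. (1 / real N) ^ (k - r)) \<longlonglongrightarrow> 0 ^ (k - r)"
      by (intro tendsto_power i)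
    then have "(\<lambda>N. (1 / real N) ^ (k - r)) \<longlonglongrightarrow> 0" using kr i by simp
    then have "(\<lambda>N. - (of_nat (Suc k choose r) * q ^ (Suc k - r) * (1 / real N) ^ (k - r))) \<longlonglongrightarrow>
       - (of_nat (Suc k choose r) * q ^ (Suc k - r) * 0)"
      by (intro tendsto_intros)
    then show ?thesis using False by simp
  qed
  show ?thesis using tendsto_cong[OF ev] lim by simp
qed

definition Drv :: "real \<Rightarrow> nat \<Rightarrow> int list \<Rightarrow> nat \<Rightarrow> real" where
  "Drv q N l k = - (\<Sum>r\<le>k. of_nat (Suc k choose r) * (q / real N) ^ (Suc k - r) * (real N * pp_moment 0 N l r))"

lemma Drv_coefD: "Drv q N l k = (\<Sum>r\<le>k. coefD q k N r * pp_moment 0 N l r)"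
  unfolding Drv_def coefD_def by (simp add: sum_negf mult_ac)

lemma Drv_cip:
  assumes conv0: "\<And>r. cip \<rho> (\<lambda>N l. pp_moment 0 N l r) (m0 r)"
  shows "cip \<rho> (\<lambda>N l. Drv q N l k) (- (real (Suc k) * q * m0 k))"
proof -
  have "cip \<rho> (\<lambda>N l. \<Sum>r\<in>{..k}. coefD q k N r * pp_moment 0 N l r)
      (\<Sum>r\<in>{..k}. (if r = k then - (real (Suc k) * q) else 0) * m0 r)"
    by (intro cip_sum cip_mult cip_det coefD_lim conv0) auto
  moreover have "(\<Sum>r\<in>{..k}. (if r = k then - (real (Suc k) * q) else 0) * m0 r) = - (real (Suc k) * q * m0 k)"
  proof -
    have "(\<Sum>r\<in>{..k}. (if r = k then - (real (Suc k) * q) else 0) * m0 r)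
       = (\<Sum>r\<in>{..k}. if r = k then - (real (Suc k) * q) * m0 r else 0)"
      by (intro sum.cong) auto
    then show ?thesis by simp
  qed
  ultimately show ?thesis by (simp add: Drv_coefD)
qed

lemma F_rec:
  fixes m0 :: "nat \<Rightarrow> real" and q :: real
  defines "Gs \<equiv> fps_const (-q) * fps_X * Abs_fps m0"
  shows "real (Suc n) * fps_nth (fps_exp 1 oo Gs) (Suc n)
     = (\<Sum>i\<le>n. fps_nth (fps_exp 1 oo Gs) i * - (real (Suc (n - i)) * q * m0 (n - i)))"
proof -
  have G0: "fps_nth Gs 0 = 0" by (simp add: Gs_def)
  have "fps_deriv (fps_exp 1 oo Gs) = (fps_exp 1 oo Gs) * fps_deriv Gs"
    using fps_compose_deriv[OF G0, of "fps_exp 1"] by (simp add: fps_exp_deriv)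
  moreover have Gd: "\<And>j. fps_nth (fps_deriv Gs) j = - (real (Suc j) * q * m0 j)"
    by (simp only: fps_deriv_nth) (simp add: Gs_def mult.assoc)
  ultimately show ?thesis using rec_from_deriv[of "fps_exp 1 oo Gs" "fps_deriv Gs" n]
    by (simp only: Gd)
qed

lemma main_conv:
  assumes supp: "\<And>N. set_pmf (\<rho> N) \<subseteq> signatures N"
    and conv0: "\<And>r. cip \<rho> (\<lambda>N l. pp_moment 0 N l r) (m0 r)"
  shows "cip \<rho> (\<lambda>N l. fps_nth (Hs q N l) n) (fps_nth (fps_exp 1 oo (fps_const (-q) * fps_X * Abs_fps m0)) n)"
proof (induction n rule: less_induct)
  case (less n)
  define F where "F = fps_exp 1 oo (fps_const (-q) * fps_X * Abs_fps m0)"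
  show ?case
  proof (cases n)
    case 0 then show ?thesis using cip_const[of \<rho> 1] by (simp add: Hs_nth0)
  next
    case (Suc m)
    have S: "cip \<rho> (\<lambda>N l. \<Sum>i\<in>{..m}. fps_nth (Hs q N l) i * Drv q N l (m - i))
        (\<Sum>i\<in>{..m}. fps_nth F i * - (real (Suc (m - i)) * q * m0 (m - i)))"
      using Suc by (intro cip_sum cip_mult Drv_cip conv0) (auto intro!: less[unfolded F_def[symmetric]])
    have S2: "cip \<rho> (\<lambda>N l. (1 / real (Suc m)) * (\<Sum>i\<in>{..m}. fps_nth (Hs q N l) i * Drv q N l (m - i)))
        ((1 / real (Suc m)) * (\<Sum>i\<in>{..m}. fps_nth F i * - (real (Suc (m - i)) * q * m0 (m - i))))"
      by (rule cip_mult[OF cip_const S])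
    have lim: "(1 / real (Suc m)) * (\<Sum>i\<in>{..m}. fps_nth F i * - (real (Suc (m - i)) * q * m0 (m - i))) = fps_nth F (Suc m)"
      using F_rec[of m q m0] unfolding F_def by (simp add: field_simps)
    have ev: "\<forall>\<^sub>F N in sequentially. \<forall>l\<in>set_pmf (\<rho> N).
        (1 / real (Suc m)) * (\<Sum>i\<in>{..m}. fps_nth (Hs q N l) i * Drv q N l (m - i)) = fps_nth (Hs q N l) (Suc m)"
      using eventually_ge_at_top[of 1]
    proof eventually_elim
      case (elim N)
      show ?case
      proof
        fix l assume "l \<in> set_pmf (\<rho> N)"
        then have l: "l \<in> signatures N" using supp by auto
        show "(1 / real (Suc m)) * (\<Sum>i\<in>{..m}. fps_nth (Hs q N l) i * Drv q N l (m - i)) = fps_nth (Hs q N l) (Suc m)"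
          using Hs_rec[OF l elim, of m q] unfolding Drv_def by (simp add: field_simps)
      qed
    qed
    show ?thesis using cip_cong[OF S2 ev] lim Suc unfolding F_def by simp
  qed
qed




lemma pow_abs_bound: "\<bar>(t::real) ^ k\<bar> \<le> 1 + t ^ (2 * k)"
proof (cases "\<bar>t\<bar> \<le> 1")
  case True
  then have "\<bar>t\<bar> ^ k \<le> 1" by (simp add: power_le_one)
  moreover have "0 \<le> t ^ (2 * k)" by (rule zero_le_even_power')
  moreover have "\<bar>t ^ k\<bar> = \<bar>t\<bar> ^ k" by (simp add: power_abs)
  ultimately show ?thesis by linarith
next
  case False
  then have "\<bar>t\<bar> ^ k \<le> \<bar>t\<bar> ^ (2 * k)" by (intro power_increasing) auto
  also have "\<dots> = t ^ (2 * k)" by (simp add: power_mult power_even_abs)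
  finally show ?thesis by (simp add: power_abs)
qed

definition trunc :: "real \<Rightarrow> real \<Rightarrow> real" where "trunc R x = max (- R) (min R x)"

lemma trunc_err: assumes "R > 0" shows "\<bar>x - trunc R x\<bar> \<le> x ^ 2 / R"
proof (cases "\<bar>x\<bar> \<le> R")
  case True then show ?thesis by (auto simp: trunc_def)
next
  case False
  then have "\<bar>x - trunc R x\<bar> \<le> \<bar>x\<bar>" using assms by (auto simp: trunc_def)
  also have "\<bar>x\<bar> \<le> x ^ 2 / R"
  proof -
    have "R * \<bar>x\<bar> \<le> \<bar>x\<bar> * \<bar>x\<bar>" using False assms by (intro mult_right_mono) auto
    then show ?thesis using assms by (simp add: field_simps power2_eq_square abs_mult_self_eq)
  qed
  finally show ?thesis .
qed

lemma trunc_bound: "R \<ge> 0 \<Longrightarrow> \<bar>trunc R x\<bar> \<le> R" by (auto simp: trunc_def)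

lemma isCont_trunc_pow: "isCont (\<lambda>t. trunc R (t ^ k)) x"
  unfolding trunc_def by (intro continuous_intros)

lemma trunc_close:
  assumes P: "real_distribution P" and R: "R > 0"
    and i1: "integrable P (\<lambda>t. t ^ k)" and i2: "integrable P (\<lambda>t. t ^ (2 * k))"
    and B: "(\<integral>t. t ^ (2 * k) \<partial>P) \<le> B"
  shows "\<bar>(\<integral>t. t ^ k \<partial>P) - (\<integral>t. trunc R (t ^ k) \<partial>P)\<bar> \<le> B / R"
proof -
  interpret P: real_distribution P by fact
  have it: "integrable P (\<lambda>t. trunc R (t ^ k))"
    using R by (intro P.integrable_const_bound[where B = R]) (auto simp: trunc_bound trunc_def)
  have "\<bar>(\<integral>t. t ^ k \<partial>P) - (\<integral>t. trunc R (t ^ k) \<partial>P)\<bar> = \<bar>\<integral>t. t ^ k - trunc R (t ^ k) \<partial>P\<bar>"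
    using i1 it by (simp add: integral_diff)
  also have "\<dots> \<le> (\<integral>t. t ^ (2 * k) / R \<partial>P)"
  proof (rule integral_abs_bound_integral)
    show "integrable P (\<lambda>t. t ^ k - trunc R (t ^ k))" using i1 it by simp
    show "integrable P (\<lambda>t. t ^ (2 * k) / R)" using i2 by simp
    fix t show "\<bar>t ^ k - trunc R (t ^ k)\<bar> \<le> t ^ (2 * k) / R"
      using trunc_err[OF R, of "t ^ k"] by (simp add: power_mult[symmetric] mult.commute)
  qed
  also have "\<dots> = (\<integral>t. t ^ (2 * k) \<partial>P) / R" by simp
  also have "\<dots> \<le> B / R" using B R by (simp add: divide_right_mono)
  finally show ?thesis .
qed

lemma moments_weak_conv:
  assumes \<mu>: "\<And>n. real_distribution (\<mu>s n)" and M: "real_distribution M" and wc: "weak_conv_m \<mu>s M"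
    and int: "\<And>n k. integrable (\<mu>s n) (\<lambda>t. t ^ k)"
    and lim: "\<And>k. (\<lambda>n. \<integral>t. t ^ k \<partial>\<mu>s n) \<longlonglongrightarrow> c k"
  shows "integrable M (\<lambda>t. t ^ k) \<and> (\<integral>t. t ^ k \<partial>M) = c k"
proof -
  interpret M: real_distribution M by fact
  interpret \<mu>: real_distribution "\<mu>s n" for n by fact
  obtain \<Omega> :: "real measure" and Ys :: "nat \<Rightarrow> real \<Rightarrow> real" and Y :: "real \<Rightarrow> real" where ps: "prob_space \<Omega>" and Ysm': "\<forall>n. Ys n \<in> measurable \<Omega> borel"
    and Ysd': "\<forall>n. distr \<Omega> borel (Ys n) = \<mu>s n" and Ym: "Y \<in> measurable \<Omega> lborel"
    and Yd: "distr \<Omega> borel Y = M" and conv': "\<forall>x\<in>space \<Omega>. (\<lambda>n. Ys n x) \<longlonglongrightarrow> Y x"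
    using Skorohod[OF \<mu> M wc] by (elim exE conjE) (rule that; assumption)
  have Ysm[measurable]: "\<And>n. Ys n \<in> measurable \<Omega> borel" using Ysm' by blast
  have Ysd: "\<And>n. distr \<Omega> borel (Ys n) = \<mu>s n" using Ysd' by blast
  have conv: "\<And>x. x \<in> space \<Omega> \<Longrightarrow> (\<lambda>n. Ys n x) \<longlonglongrightarrow> Y x" using conv' by blast
  have Ym'[measurable]: "Y \<in> borel_measurable \<Omega>" using Ym by simp
  \<comment> \<open>uniform bound on even moments, and Fatou\<close>
  have even: "\<exists>B>0. (\<forall>n. (\<integral>t. t ^ (2 * j) \<partial>\<mu>s n) \<le> B) \<and> integrable M (\<lambda>t. t ^ (2 * j)) \<and> (\<integral>t. t ^ (2 * j) \<partial>M) \<le> B" for j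
  proof -
    obtain B where B: "B > 0" "\<And>n. norm (\<integral>t. t ^ (2 * j) \<partial>\<mu>s n) \<le> B"
      using convergent_imp_Bseq[OF convergentI[OF lim[of "2 * j"]]] by (auto elim: BseqE)
    have Bn: "(\<integral>t. t ^ (2 * j) \<partial>\<mu>s n) \<le> B" for n using B(2)[of n] by simp
    have "(\<integral>\<^sup>+t. ennreal (t ^ (2 * j)) \<partial>M) = (\<integral>\<^sup>+x. ennreal (Y x ^ (2 * j)) \<partial>\<Omega>)"
      unfolding Yd[symmetric] by (subst nn_integral_distr) auto
    also have "\<dots> = (\<integral>\<^sup>+x. liminf (\<lambda>n. ennreal (Ys n x ^ (2 * j))) \<partial>\<Omega>)"
    proof (rule nn_integral_cong)
      fix x assume x: "x \<in> space \<Omega>"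
      have "(\<lambda>n. ennreal (Ys n x ^ (2 * j))) \<longlonglongrightarrow> ennreal (Y x ^ (2 * j))"
        by (intro tendsto_ennrealI tendsto_power conv[OF x])
      then show "ennreal (Y x ^ (2 * j)) = liminf (\<lambda>n. ennreal (Ys n x ^ (2 * j)))"
        using lim_imp_Liminf[OF sequentially_bot] by metis
    qed
    also have "\<dots> \<le> liminf (\<lambda>n. \<integral>\<^sup>+x. ennreal (Ys n x ^ (2 * j)) \<partial>\<Omega>)"
      by (rule nn_integral_liminf) simp
    also have "\<dots> \<le> ennreal B"
    proof (rule Liminf_le)
      show "\<forall>\<^sub>F n in sequentially. (\<integral>\<^sup>+x. ennreal (Ys n x ^ (2 * j)) \<partial>\<Omega>) \<le> ennreal B"
      proof (intro always_eventually allI)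
        fix n
        have "(\<integral>\<^sup>+x. ennreal (Ys n x ^ (2 * j)) \<partial>\<Omega>) = (\<integral>\<^sup>+t. ennreal (t ^ (2 * j)) \<partial>\<mu>s n)"
          unfolding Ysd[symmetric] by (subst nn_integral_distr) auto
        also have "\<dots> = ennreal (\<integral>t. t ^ (2 * j) \<partial>\<mu>s n)"
          by (intro nn_integral_eq_integral int) auto
        also have "\<dots> \<le> ennreal B" using Bn by (simp add: ennreal_leI)
        finally show "(\<integral>\<^sup>+x. ennreal (Ys n x ^ (2 * j)) \<partial>\<Omega>) \<le> ennreal B" .
      qed
    qed simp
    finally have nn: "(\<integral>\<^sup>+t. ennreal (t ^ (2 * j)) \<partial>M) \<le> ennreal B" .
    have iM: "integrable M (\<lambda>t. t ^ (2 * j))"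
      by (rule integrableI_nonneg) (use nn in \<open>auto simp: top_unique less_top[symmetric]\<close>)
    have "ennreal (\<integral>t. t ^ (2 * j) \<partial>M) \<le> ennreal B"
      using nn by (subst nn_integral_eq_integral[OF iM, symmetric]) auto
    then have "(\<integral>t. t ^ (2 * j) \<partial>M) \<le> B" using B(1) by (simp add: ennreal_le_iff)
    then show ?thesis using B(1) Bn iM by blast
  qed
  obtain B where B: "B > 0" "\<And>n. (\<integral>t. t ^ (2 * k) \<partial>\<mu>s n) \<le> B"
    and iM2: "integrable M (\<lambda>t. t ^ (2 * k))" and BM: "(\<integral>t. t ^ (2 * k) \<partial>M) \<le> B"
    using even[of k] by blast
  have iMk: "integrable M (\<lambda>t. t ^ k)"
  proof (rule Bochner_Integration.integrable_bound)
    show "integrable M (\<lambda>t. 1 + t ^ (2 * k))" using iM2 by simp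
    show "AE x in M. norm (x ^ k) \<le> norm (1 + x ^ (2 * k))"
      using pow_abs_bound by (intro AE_I2) (simp add: add_nonneg_nonneg)
  qed simp
  have "(\<lambda>n. \<integral>t. t ^ k \<partial>\<mu>s n) \<longlonglongrightarrow> (\<integral>t. t ^ k \<partial>M)"
  proof (rule LIMSEQ_I)
    fix \<epsilon> :: real assume e: "\<epsilon> > 0"
    define R where "R = 3 * B / \<epsilon>"
    have R: "R > 0" using B(1) e by (simp add: R_def)
    have BR: "B / R = \<epsilon> / 3" using B(1) e by (simp add: R_def field_simps)
    have "(\<lambda>n. \<integral>t. trunc R (t ^ k) \<partial>\<mu>s n) \<longlonglongrightarrow> (\<integral>t. trunc R (t ^ k) \<partial>M)"
      using R by (intro weak_conv_imp_integral_bdd_continuous_conv[OF \<mu> M wc, where B = R] isCont_trunc_pow)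
        (simp add: trunc_bound)
    then obtain n0 where n0: "\<And>n. n \<ge> n0 \<Longrightarrow> norm ((\<integral>t. trunc R (t ^ k) \<partial>\<mu>s n) - (\<integral>t. trunc R (t ^ k) \<partial>M)) < \<epsilon> / 3"
      using LIMSEQ_D[of _ _ "\<epsilon> / 3"] e by (metis divide_pos_pos zero_less_numeral)
    show "\<exists>n0. \<forall>n\<ge>n0. norm ((\<integral>t. t ^ k \<partial>\<mu>s n) - (\<integral>t. t ^ k \<partial>M)) < \<epsilon>"
    proof (intro exI allI impI)
      fix n assume n: "n \<ge> n0"
      have a: "\<bar>(\<integral>t. t ^ k \<partial>\<mu>s n) - (\<integral>t. trunc R (t ^ k) \<partial>\<mu>s n)\<bar> \<le> \<epsilon> / 3"
        using trunc_close[OF \<mu> R int int B(2)] BR by simp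
      have b: "\<bar>(\<integral>t. t ^ k \<partial>M) - (\<integral>t. trunc R (t ^ k) \<partial>M)\<bar> \<le> \<epsilon> / 3"
        using trunc_close[OF M R iMk iM2 BM] BR by simp
      have c: "\<bar>(\<integral>t. trunc R (t ^ k) \<partial>\<mu>s n) - (\<integral>t. trunc R (t ^ k) \<partial>M)\<bar> < \<epsilon> / 3"
        using n0[OF n] by simp
      show "norm ((\<integral>t. t ^ k \<partial>\<mu>s n) - (\<integral>t. t ^ k \<partial>M)) < \<epsilon>"
        unfolding real_norm_def using a b c by arith
    qed
  qed
  then have "(\<integral>t. t ^ k \<partial>M) = c k" using lim[of k] by (rule LIMSEQ_unique)
  then show ?thesis using iMk by simp
qed




lemma frac_nonneg_aux:
  fixes x q :: real
  assumes "x \<ge> 1 \<or> x \<le> -1" "\<bar>q\<bar> \<le> 1"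
  shows "0 \<le> (x - q) / x"
  using assms(1)
proof
  assume "x \<ge> 1" then show ?thesis using assms(2) by (intro divide_nonneg_pos) auto
next
  assume "x \<le> -1" then show ?thesis using assms(2) by (intro divide_nonpos_neg) auto
qed

lemma weight_nonneg:
  assumes "l \<in> signatures N" "i < N" "\<bar>q\<bar> \<le> 1"
  shows "0 \<le> pp_weight q N l i"
  unfolding pp_weight_def
proof (intro mult_nonneg_nonneg prod_nonneg ballI)
  fix j assume j: "j \<in> {0..<N} - {i}"
  define d where "d = (l ! i - int i) - (l ! j - int j)"
  have "d \<noteq> 0" using sig_neq[OF assms(1) assms(2), of j] j by (auto simp: xs_def d_def)
  then have "real_of_int d \<ge> 1 \<or> real_of_int d \<le> -1" by linarith
  from frac_nonneg_aux[OF this assms(3)]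
  show "0 \<le> (real_of_int (l ! i - int i - (l ! j - int j)) - q) / real_of_int (l ! i - int i - (l ! j - int j))"
    unfolding d_def .
qed simp

lemma moment0_one:
  assumes "l \<in> signatures N" "N \<ge> 1" "q \<noteq> 0"
  shows "pp_moment q N l 0 = 1"
proof -
  have "real (Suc 0) * fps_nth (Hs q N l) (Suc 0) = fps_nth (Hs q N l) 0 *
         - (of_nat (Suc 0 choose 0) * (q / real N) ^ (Suc 0 - 0) * (real N * pp_moment 0 N l 0))"
    using Hs_rec[OF assms(1,2), of 0 q] by simp
  then have "- q * pp_moment q N l 0 = - (q / real N * (real N * 1))"
    using pp_moment0_zero[OF assms(1,2)] by (simp add: Hs_nth0 Hs_nthSuc)
  then show ?thesis using assms by simp
qed

definition wpmf :: "real \<Rightarrow> nat \<Rightarrow> int list \<Rightarrow> nat pmf" where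
  "wpmf q N l = embed_pmf (\<lambda>i. if i < N then pp_weight q N l i else 0)"

definition nu :: "real \<Rightarrow> nat \<Rightarrow> int list \<Rightarrow> real measure" where
  "nu q N l = distr (measure_pmf (wpmf q N l)) borel (pp_atom N l)"

lemma nu_props:
  assumes l: "l \<in> signatures N" and N: "N \<ge> 1" and q: "q \<noteq> 0" "\<bar>q\<bar> \<le> 1"
  shows "real_distribution (nu q N l)" "integrable (nu q N l) (\<lambda>t. t ^ k)"
    "(\<integral>t. t ^ k \<partial>nu q N l) = pp_moment q N l k"
proof -
  define f where "f = (\<lambda>i. if i < N then pp_weight q N l i else 0)"
  have nn: "\<And>i. 0 \<le> f i" using weight_nonneg[OF l _ q(2)] by (simp add: f_def)
  have "(\<integral>\<^sup>+i. ennreal (f i) \<partial>count_space UNIV) = (\<Sum>i<N. ennreal (f i))"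
    by (rule nn_integral_count_space') (auto simp: f_def)
  also have "\<dots> = ennreal (\<Sum>i<N. f i)" using nn by (simp add: sum_ennreal)
  also have "(\<Sum>i<N. f i) = pp_moment q N l 0" by (simp add: f_def pp_moment_def)
  also have "\<dots> = 1" using moment0_one[OF l N q(1)] .
  finally have pr: "(\<integral>\<^sup>+i. ennreal (f i) \<partial>count_space UNIV) = 1" by simp
  have pmf: "pmf (wpmf q N l) i = f i" for i
    unfolding wpmf_def f_def[symmetric] using pmf_embed_pmf[of f, OF nn pr] .
  have set: "set_pmf (wpmf q N l) \<subseteq> {..<N}"
    by (auto simp: set_pmf_iff pmf f_def split: if_splits)
  show "real_distribution (nu q N l)"
    unfolding nu_def
    by (auto simp: real_distribution_def real_distribution_axioms_def intro!: prob_space.prob_space_distr prob_space_measure_pmf)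
  show "integrable (nu q N l) (\<lambda>t. t ^ k)"
    unfolding nu_def
    by (subst integrable_distr_eq) (auto intro!: integrable_measure_pmf_finite finite_subset[OF set])
  have "(\<integral>t. t ^ k \<partial>nu q N l) = (\<integral>i. pp_atom N l i ^ k \<partial>measure_pmf (wpmf q N l))"
    unfolding nu_def by (subst integral_distr) auto
  also have "\<dots> = (\<Sum>i\<in>{..<N}. pmf (wpmf q N l) i *\<^sub>R pp_atom N l i ^ k)"
    by (rule integral_measure_pmf) (use set in auto)
  also have "\<dots> = pp_moment q N l k" by (simp add: pmf f_def pp_moment_def)
  finally show "(\<integral>t. t ^ k \<partial>nu q N l) = pp_moment q N l k" .
qed




lemma exists_good:
  assumes conv: "\<And>k. cip \<rho> (\<lambda>N l. pp_moment q N l k) (c k)"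
  shows "\<exists>N l. N \<ge> 1 \<and> l \<in> set_pmf (\<rho> N) \<and> (\<forall>k\<le>K+2. \<bar>pp_moment q N l k - c k\<bar> \<le> 1 / (real K + 1))"
proof -
  define \<delta> where "\<delta> = 1 / (real K + 1)"
  have d: "\<delta> > 0" by (simp add: \<delta>_def)
  define B where "B N k = {l. \<delta> < \<bar>pp_moment q N l k - c k\<bar>}" for N k
  have lim: "(\<lambda>N. \<Sum>k\<le>K+2. measure_pmf.prob (\<rho> N) (B N k)) \<longlonglongrightarrow> 0"
    by (rule tendsto_null_sum) (use conv d in \<open>auto simp: cip_def B_def\<close>)
  have "\<forall>\<^sub>F N in sequentially. (\<Sum>k\<le>K+2. measure_pmf.prob (\<rho> N) (B N k)) < 1 \<and> N \<ge> 1"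
    by (intro eventually_conj order_tendstoD(2)[OF lim] eventually_ge_at_top) simp
  then obtain N where N: "(\<Sum>k\<le>K+2. measure_pmf.prob (\<rho> N) (B N k)) < 1" "N \<ge> 1"
    by (auto simp: eventually_sequentially)
  define A where "A = (\<Union>k\<le>K+2. B N k)"
  have "measure_pmf.prob (\<rho> N) A \<le> (\<Sum>k\<le>K+2. measure_pmf.prob (\<rho> N) (B N k))"
    unfolding A_def by (rule measure_UNION_le) auto
  then have "measure_pmf.prob (\<rho> N) A < 1" using N by simp
  then have "measure_pmf.prob (\<rho> N) (UNIV - A) \<noteq> 0"
    using measure_pmf.prob_compl[of A "\<rho> N"] by simp
  then obtain l where l: "l \<in> set_pmf (\<rho> N)" "l \<notin> A"
    unfolding measure_pmf_zero_iff by auto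
  then have "\<forall>k\<le>K+2. \<bar>pp_moment q N l k - c k\<bar> \<le> 1 / (real K + 1)"
    by (auto simp: A_def B_def \<delta>_def not_less)
  then show ?thesis using N l by blast
qed

lemma R_aux:
  fixes Bt \<epsilon> :: real
  assumes "Bt > 0" "\<epsilon> > 0"
  shows "Bt / (Bt / \<epsilon> + 1) ^ 2 < \<epsilon>"
proof -
  define R where "R = Bt / \<epsilon> + 1"
  have R1: "R \<ge> 1" using assms by (simp add: R_def)
  have "Bt < \<epsilon> * R" using assms by (simp add: R_def field_simps)
  then have "Bt / R < \<epsilon>" using R1 by (simp add: field_simps)
  moreover have "Bt / R ^ 2 \<le> Bt / R"
    using R1 assms by (intro divide_left_mono) (auto simp: power2_eq_square)
  ultimately show ?thesis unfolding R_def[symmetric] by linarith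
qed

lemma tight_aux:
  assumes P: "real_distribution P" and i2: "integrable P (\<lambda>t. t ^ 2)" and B: "(\<integral>t. t ^ 2 \<partial>P) \<le> Bt"
    and Bt: "Bt > 0" and e: "\<epsilon> > 0"
  shows "measure P {- (Bt / \<epsilon> + 1)<..Bt / \<epsilon> + 1} > 1 - \<epsilon>"
proof -
  interpret P: real_distribution P by fact
  define R where "R = Bt / \<epsilon> + 1"
  have R: "R > 0" unfolding R_def using divide_pos_pos[OF Bt e] by linarith
  have sub: "UNIV - {- R<..R} \<subseteq> {x \<in> space P. R ^ 2 \<le> x ^ 2}"
  proof
    fix x assume "x \<in> UNIV - {- R<..R}"
    then have "x \<le> - R \<or> x > R" by auto
    then have "R \<le> \<bar>x\<bar>" by auto
    then have "R ^ 2 \<le> \<bar>x\<bar> ^ 2" using R by (intro power_mono) auto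
    then show "x \<in> {x \<in> space P. R ^ 2 \<le> x ^ 2}" by simp
  qed
  have "measure P (UNIV - {- R<..R}) \<le> measure P {x \<in> space P. R ^ 2 \<le> x ^ 2}"
    using sub by (intro P.finite_measure_mono) auto
  also have "\<dots> \<le> (\<integral>t. t ^ 2 \<partial>P) / R ^ 2"
    using R by (intro integral_Markov_inequality_measure[OF i2, where A = UNIV]) auto
  also have "\<dots> \<le> Bt / R ^ 2" using B R by (intro divide_right_mono) auto
  also have "\<dots> < \<epsilon>" unfolding R_def by (rule R_aux[OF Bt e])
  finally have "measure P (UNIV - {- R<..R}) < \<epsilon>" .
  moreover have "measure P (UNIV - {- R<..R}) = 1 - measure P {- R<..R}"
    using P.prob_compl[of "{- R<..R}"] by simp
  ultimately show ?thesis unfolding R_def[symmetric] by simp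
qed




lemma case_qnz:
  fixes \<rho> :: "nat \<Rightarrow> int list pmf" and m0 :: "nat \<Rightarrow> real" and q :: real
  assumes supp: "\<And>N. set_pmf (\<rho> N) \<subseteq> signatures N"
    and conv0: "\<And>r. cip \<rho> (\<lambda>N l. pp_moment 0 N l r) (m0 r)"
    and q: "-1 \<le> q" "q \<le> 1" "q \<noteq> 0"
  shows "\<exists>\<mu>q :: real measure. sets \<mu>q = sets borel \<and> prob_space \<mu>q
       \<and> (\<forall>k. integrable \<mu>q (\<lambda>t. t ^ k))
       \<and> pp_moments_converge_in_prob q \<rho> (moment \<mu>q)
       \<and> fps_exp 1 oo (fps_const (- q) * fps_X * Abs_fps m0)
           = 1 - fps_const q * fps_X * Abs_fps (moment \<mu>q)"
proof -
  have qa: "\<bar>q\<bar> \<le> 1" using q by auto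
  define F where "F = fps_exp 1 oo (fps_const (- q) * fps_X * Abs_fps m0)"
  define c where "c n = - fps_nth F (Suc n) / q" for n
  have convq: "cip \<rho> (\<lambda>N l. pp_moment q N l k) (c k)" for k
  proof -
    have "cip \<rho> (\<lambda>N l. (- 1 / q) * fps_nth (Hs q N l) (Suc k)) ((- 1 / q) * fps_nth F (Suc k))"
      by (rule cip_mult[OF cip_const]) (unfold F_def, rule main_conv[OF supp conv0])
    moreover have "(- 1 / q) * fps_nth (Hs q N l) (Suc k) = pp_moment q N l k" for N l
      using q(3) by (simp add: Hs_nthSuc)
    ultimately show ?thesis by (simp add: c_def)
  qed
  have ident: "F = 1 - fps_const q * fps_X * Abs_fps c"
  proof (rule fps_ext)
    fix n show "fps_nth F n = fps_nth (1 - fps_const q * fps_X * Abs_fps c) n"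
      by (cases n) (use q(3) in \<open>simp_all add: F_def c_def mult.assoc\<close>)
  qed
  have "\<forall>K. \<exists>Nl. fst Nl \<ge> 1 \<and> snd Nl \<in> set_pmf (\<rho> (fst Nl)) \<and>
      (\<forall>k\<le>K+2. \<bar>pp_moment q (fst Nl) (snd Nl) k - c k\<bar> \<le> 1 / (real K + 1))"
    using exists_good[OF convq] by force
  then obtain g where g: "\<And>K. fst (g K) \<ge> 1" "\<And>K. snd (g K) \<in> set_pmf (\<rho> (fst (g K)))"
    "\<And>K k. k \<le> K + 2 \<Longrightarrow> \<bar>pp_moment q (fst (g K)) (snd (g K)) k - c k\<bar> \<le> 1 / (real K + 1)"
    by metis
  define \<nu>s where "\<nu>s K = nu q (fst (g K)) (snd (g K))" for K
  have sig: "snd (g K) \<in> signatures (fst (g K))" for K using g(2) supp by blast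
  note np = nu_props[OF sig g(1) q(3) qa]
  have rd: "\<And>K. real_distribution (\<nu>s K)" using np(1) by (simp add: \<nu>s_def)
  have ik: "\<And>K k. integrable (\<nu>s K) (\<lambda>t. t ^ k)" using np(2) by (simp add: \<nu>s_def)
  have mk: "\<And>K k. (\<integral>t. t ^ k \<partial>\<nu>s K) = pp_moment q (fst (g K)) (snd (g K)) k" using np(3) by (simp add: \<nu>s_def)
  have limm: "(\<lambda>K. \<integral>t. t ^ k \<partial>\<nu>s K) \<longlonglongrightarrow> c k" for k
  proof (rule tendsto_sandwich[where f = "\<lambda>K. c k - 1 / (real K + 1)" and h = "\<lambda>K. c k + 1 / (real K + 1)"])
    have "\<forall>\<^sub>F K in sequentially. \<bar>(\<integral>t. t ^ k \<partial>\<nu>s K) - c k\<bar> \<le> 1 / (real K + 1)"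
      using eventually_ge_at_top[of k] by eventually_elim (simp add: mk g(3))
    then show "\<forall>\<^sub>F K in sequentially. c k - 1 / (real K + 1) \<le> (\<integral>t. t ^ k \<partial>\<nu>s K)"
      and "\<forall>\<^sub>F K in sequentially. (\<integral>t. t ^ k \<partial>\<nu>s K) \<le> c k + 1 / (real K + 1)"
      by (auto elim!: eventually_mono)
    have z: "(\<lambda>K. 1 / (real K + 1)) \<longlonglongrightarrow> 0"
      using LIMSEQ_inverse_real_of_nat by (simp add: inverse_eq_divide add.commute)
    show "(\<lambda>K. c k - 1 / (real K + 1)) \<longlonglongrightarrow> c k" using tendsto_diff[OF tendsto_const z] by simp
    show "(\<lambda>K. c k + 1 / (real K + 1)) \<longlonglongrightarrow> c k" using tendsto_add[OF tendsto_const z] by simp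
  qed
  define Bt where "Bt = \<bar>c 2\<bar> + 1"
  have Bt: "Bt > 0" by (simp add: Bt_def)
  have B2: "(\<integral>t. t ^ 2 \<partial>\<nu>s K) \<le> Bt" for K
  proof -
    have "\<bar>(\<integral>t. t ^ 2 \<partial>\<nu>s K) - c 2\<bar> \<le> 1 / (real K + 1)" by (simp add: mk g(3))
    moreover have "1 / (real K + 1) \<le> 1" by (simp add: field_simps)
    ultimately show ?thesis unfolding Bt_def by linarith
  qed
  have tight: "tight \<nu>s"
    unfolding tight_def
  proof (intro conjI allI impI)
    fix n show "real_distribution (\<nu>s n)" by (rule rd)
  next
    fix \<epsilon> :: real assume e: "\<epsilon> > 0"
    show "\<exists>a b. a < b \<and> (\<forall>n. 1 - \<epsilon> < measure (\<nu>s n) {a<..b})"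
    proof (intro exI conjI allI)
      show "- (Bt / \<epsilon> + 1) < Bt / \<epsilon> + 1" using divide_pos_pos[OF Bt e] by linarith
      fix n show "1 - \<epsilon> < measure (\<nu>s n) {- (Bt / \<epsilon> + 1)<..Bt / \<epsilon> + 1}"
        by (rule tight_aux[OF rd ik B2 Bt e])
    qed
  qed
  obtain r M where r: "strict_mono r" and M: "real_distribution M" and wc: "weak_conv_m (\<nu>s \<circ> id \<circ> r) M"
    using tight_imp_convergent_subsubsequence[OF tight, of id] by (auto simp: strict_mono_def)
  have mom: "integrable M (\<lambda>t. t ^ k) \<and> (\<integral>t. t ^ k \<partial>M) = c k" for k
  proof (rule moments_weak_conv[where \<mu>s = "\<nu>s \<circ> r"])
    show "\<And>n. real_distribution ((\<nu>s \<circ> r) n)" using rd by simp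
    show "real_distribution M" by fact
    show "weak_conv_m (\<nu>s \<circ> r) M" using wc by simp
    show "\<And>n k. integrable ((\<nu>s \<circ> r) n) (\<lambda>t. t ^ k)" using ik by simp
    show "\<And>k. (\<lambda>n. \<integral>t. t ^ k \<partial>(\<nu>s \<circ> r) n) \<longlonglongrightarrow> c k"
      using LIMSEQ_subseq_LIMSEQ[OF limm r] by (simp add: o_def)
  qed
  have mM: "moment M = c" using mom by (simp add: moment_def fun_eq_iff)
  interpret M: real_distribution M by fact
  show ?thesis
  proof (intro exI conjI allI)
    show "sets M = sets borel" by simp
    show "prob_space M" by (rule M.prob_space_axioms)
    fix k show "integrable M (\<lambda>t. t ^ k)" using mom by simp
  next
    show "pp_moments_converge_in_prob q \<rho> (moment M)" unfolding cip_pp mM using convq by simp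
    show "fps_exp 1 oo (fps_const (- q) * fps_X * Abs_fps m0) = 1 - fps_const q * fps_X * Abs_fps (moment M)"
      using ident unfolding mM F_def .
  qed
qed


theorem theorem26:
  fixes \<rho> :: "nat \<Rightarrow> int list pmf" and \<mu>0 :: "real measure"
  assumes supp: "\<And>N. set_pmf (\<rho> N) \<subseteq> signatures N"
    and mu0_borel: "sets \<mu>0 = sets borel"
    and mu0_fin: "finite_measure \<mu>0"
    and mu0_int: "\<And>k. integrable \<mu>0 (\<lambda>t. t ^ k)"
    and conv0: "pp_moments_converge_in_prob 0 \<rho> (moment \<mu>0)"
  shows "\<forall>q::real. -1 \<le> q \<and> q \<le> 1 \<longrightarrow>
    (\<exists>\<mu>q :: real measure. sets \<mu>q = sets borel \<and> prob_space \<mu>q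
       \<and> (\<forall>k. integrable \<mu>q (\<lambda>t. t ^ k))
       \<and> pp_moments_converge_in_prob q \<rho> (moment \<mu>q)
       \<and> fps_exp 1 oo (fps_const (- q) * fps_X * Abs_fps (moment \<mu>0))
           = 1 - fps_const q * fps_X * Abs_fps (moment \<mu>q))"
proof (intro allI impI)
  fix q :: real assume q: "-1 \<le> q \<and> q \<le> 1"
  have c0: "\<And>r. cip \<rho> (\<lambda>N l. pp_moment 0 N l r) (moment \<mu>0 r)" using conv0 unfolding cip_pp by blast
  show "\<exists>\<mu>q :: real measure. sets \<mu>q = sets borel \<and> prob_space \<mu>q
       \<and> (\<forall>k. integrable \<mu>q (\<lambda>t. t ^ k))
       \<and> pp_moments_converge_in_prob q \<rho> (moment \<mu>q)
       \<and> fps_exp 1 oo (fps_const (- q) * fps_X * Abs_fps (moment \<mu>0))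
           = 1 - fps_const q * fps_X * Abs_fps (moment \<mu>q)"
  proof (cases "q = 0")
    case False
    then show ?thesis using case_qnz[OF supp c0] q by blast
  next
    case True
    interpret F0: finite_measure \<mu>0 by (rule mu0_fin)
    have ev: "\<forall>\<^sub>F N in sequentially. \<forall>l\<in>set_pmf (\<rho> N). pp_moment 0 N l 0 = 1"
      using eventually_ge_at_top[of 1]
      by eventually_elim (use supp pp_moment0_zero in blast)
    have "moment \<mu>0 0 = 1" by (rule cip_unique[OF c0 ev])
    then have "measure \<mu>0 (space \<mu>0) = 1" by (simp add: moment_def)
    then have ps: "prob_space \<mu>0"
      by (intro prob_spaceI) (simp add: F0.emeasure_eq_measure)
    have "fps_exp 1 oo (fps_const (- q) * fps_X * Abs_fps (moment \<mu>0)) = 1"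
      using True by (simp add: fps_compose_0_right)
    then show ?thesis using True ps mu0_borel mu0_int conv0
      by (intro exI[of _ \<mu>0]) simp
  qed
qed

end
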